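(* Let $(M_I,\triangleright)$ and $(N_J,\triangleright)$ be factor systems. Then their function space $[M_I\to N_J]$ is a factor system. Moreover: (1) If the relations $\triangleright$ on $N_J$ satisfy (Fun), resp. (Stab), then so do the relations $\triangleright$ on $[M_I\to N_J]$. (2) If $M_I$ is inverse and $N_J$ is direct, then $[M_I\to N_J]$ is direct. (3) If $M_I$ is direct and $N_J$ is inverse, then $[M_I\to N_J]$ is inverse.
   Context: Let $(I,\le)$ be a non-empty directed preordered set. A system $(M_I,\triangleright)$ consists of sets $M_i$ ($i\in I$, regarded as pairwise disjoint) and, for $i\le i'$, relations $\triangleright\subseteq M_{i'}\times M_i$ (written $a_{i'}\triangleright a_i$), reflexive when $i=i'$. Elements $a_i\in M_i$, $b_j\in M_j$ are consistent, $a_i\approx b_j$, iff there are $i'\ge i,j$ and $c\in M_{i'}$ with $c\triangleright a_i$ and $c\triangleright b_j$. A prefactor system is a system with $a_{i'}\approx a_i\iff a_{i'}\triangleright a_i$ for all $i\le i'$. Condition (Fun): for all $i$ and $a_i,b_i\in M_i$, $a_i\approx b_i\iff a_i\triangleright b_i\iff a_i=b_i$. Condition (Stab): for all $i\le i'$, $a_{i'}\in M_{i'}$, $a_i,b_i\in M_i$: $a_{i'}\triangleright a_i$ and $a_i\approx b_i$ imply $a_{i'}\triangleright b_i$. $\approx$-embeddings: $\approx$-preserving maps $emb_{i,i'}:M_i\to M_{i'}$ ($i\le i'$) with $emb_{i,i}(a)\approx a$, $emb_{i',i''}(emb_{i,i'}(a))\approx emb_{i,i''}(a)$; coherent if $a_{i'}\triangleright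 a_i\Rightarrow emb_{i',i''}(a_{i'})\triangleright a_i$ for $i\le i'\le i''$. $\approx$-projections: $\approx$-preserving maps $proj_{i',i}:M_{i'}\to M_i$ with $proj_{i,i}(a)\approx a$, $proj_{i',i}(proj_{i'',i'}(a))\approx proj_{i'',i}(a)$; coherent if $a_{i''}\triangleright a_i\Rightarrow proj_{i'',i'}(a_{i''})\triangleright a_i$ for $i\le i'\le i''$. They form an $\approx$-embedding-projection pair if $proj_{i',i}(emb_{i,i'}(a))\approx a$. A factor system is a prefactor system with a coherent $\approx$-embedding-projection pair. A prefactor system is direct iff it has coherent $\approx$-embeddings with $a_{i'}\triangleright a_i\iff a_{i'}\approx emb_{i,i'}(a_i)$; inverse iff it has coherent $\approx$-projections with $a_{i'}\triangleright a_i\iff proj_{i',i}(a_{i'})\approx a_i$. Function space: for factor systems $M_I,N_J$, $[M_I\to N_J]$ is indexed by $I\times J$ with the product order, an index written $i\to j$; its state $[M_i\to N_j]$ is the set of all total functions $f:M_i\to N_j$ with $a\approx b\Rightarrow f(a)\approx f(b)$. For $i\to j\le i'\to j'$, $f'\triangleright f$ iff for all $a_{i'}\in M_{i'}$, $a_i\in M_i$ with $a_{i'}\triangleright a_i$ we have $f'(a_{i'})\triangleright f(a_i)$. Embeddings $emb_{i\to j,i'\to j'}(f)=emb_{j,j'}\circ f\circ proj_{i',i}$ and projections $proj_{i'\to j',i\to j}(f')=proj_{j',j}\circ f'\circ emb_{i,i'}$. *)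

theory Defs
  imports "HOL-Library.FuncSet"
begin

text \<open>A system (M_I, R) is given by an index set I with preorder le,
  states M i (i in I) and relations R i' i a' a meaning a' in M i' is
  related to a in M i (only for i le i').  Elements carry their index
  explicitly, so the states are implicitly disjoint.\<close>

definition directed_preorder :: "'i set \<Rightarrow> ('i \<Rightarrow> 'i \<Rightarrow> bool) \<Rightarrow> bool" where
  "directed_preorder I le \<longleftrightarrow> I \<noteq> {} \<and> (\<forall>i\<in>I. le i i)
     \<and> (\<forall>i\<in>I. \<forall>j\<in>I. \<forall>k\<in>I. le i j \<and> le j k \<longrightarrow> le i k)
     \<and> (\<forall>i\<in>I. \<forall>j\<in>I. \<exists>k\<in>I. le i k \<and> le j k)"

definition is_system :: "'i set \<Rightarrow> ('i \<Rightarrow> 'i \<Rightarrow> bool) \<Rightarrow> ('i \<Rightarrow> 'a set)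
    \<Rightarrow> ('i \<Rightarrow> 'i \<Rightarrow> 'a \<Rightarrow> 'a \<Rightarrow> bool) \<Rightarrow> bool" where
  "is_system I le M R \<longleftrightarrow> directed_preorder I le
     \<and> (\<forall>i' i a' a. R i' i a' a \<longrightarrow> i' \<in> I \<and> i \<in> I \<and> le i i' \<and> a' \<in> M i' \<and> a \<in> M i)
     \<and> (\<forall>i\<in>I. \<forall>a\<in>M i. R i i a a)"

definition consistent :: "'i set \<Rightarrow> ('i \<Rightarrow> 'i \<Rightarrow> bool) \<Rightarrow> ('i \<Rightarrow> 'a set)
    \<Rightarrow> ('i \<Rightarrow> 'i \<Rightarrow> 'a \<Rightarrow> 'a \<Rightarrow> bool) \<Rightarrow> 'i \<Rightarrow> 'a \<Rightarrow> 'i \<Rightarrow> 'a \<Rightarrow> bool" where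
  "consistent I le M R i a j b \<longleftrightarrow>
     (\<exists>k\<in>I. le i k \<and> le j k \<and> (\<exists>c\<in>M k. R k i c a \<and> R k j c b))"

definition prefactor_system where
  "prefactor_system I le M R \<longleftrightarrow> is_system I le M R \<and>
     (\<forall>i\<in>I. \<forall>i'\<in>I. le i i' \<longrightarrow> (\<forall>a'\<in>M i'. \<forall>a\<in>M i.
        consistent I le M R i' a' i a \<longleftrightarrow> R i' i a' a))"

definition cond_Fun where
  "cond_Fun I le M R \<longleftrightarrow> (\<forall>i\<in>I. \<forall>a\<in>M i. \<forall>b\<in>M i.
     (consistent I le M R i a i b \<longleftrightarrow> R i i a b) \<and> (R i i a b \<longleftrightarrow> a = b))"

definition cond_Stab where
  "cond_Stab I le M R \<longleftrightarrow> (\<forall>i\<in>I. \<forall>i'\<in>I. le i i' \<longrightarrow>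
     (\<forall>a'\<in>M i'. \<forall>a\<in>M i. \<forall>b\<in>M i.
        R i' i a' a \<and> consistent I le M R i a i b \<longrightarrow> R i' i a' b))"

text \<open>emb i i' : M i \<rightarrow> M i' and proj i' i : M i' \<rightarrow> M i, for i le i'.\<close>

definition cons_embeddings where
  "cons_embeddings I le M R emb \<longleftrightarrow>
     (\<forall>i\<in>I. \<forall>i'\<in>I. le i i' \<longrightarrow>
        (\<forall>a\<in>M i. emb i i' a \<in> M i') \<and>
        (\<forall>a\<in>M i. \<forall>b\<in>M i. consistent I le M R i a i b \<longrightarrow>
            consistent I le M R i' (emb i i' a) i' (emb i i' b))) \<and>
     (\<forall>i\<in>I. \<forall>a\<in>M i. consistent I le M R i (emb i i a) i a) \<and>
     (\<forall>i\<in>I. \<forall>i'\<in>I. \<forall>i''\<in>I. le i i' \<and> le i' i'' \<longrightarrow> (\<forall>a\<in>M i.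
        consistent I le M R i'' (emb i' i'' (emb i i' a)) i'' (emb i i'' a)))"

definition coherent_embeddings where
  "coherent_embeddings I le M R emb \<longleftrightarrow>
     (\<forall>i\<in>I. \<forall>i'\<in>I. \<forall>i''\<in>I. le i i' \<and> le i' i'' \<longrightarrow>
        (\<forall>a'\<in>M i'. \<forall>a\<in>M i. R i' i a' a \<longrightarrow> R i'' i (emb i' i'' a') a))"

definition cons_projections where
  "cons_projections I le M R proj \<longleftrightarrow>
     (\<forall>i\<in>I. \<forall>i'\<in>I. le i i' \<longrightarrow>
        (\<forall>a\<in>M i'. proj i' i a \<in> M i) \<and>
        (\<forall>a\<in>M i'. \<forall>b\<in>M i'. consistent I le M R i' a i' b \<longrightarrow>
            consistent I le M R i (proj i' i a) i (proj i' i b))) \<and>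
     (\<forall>i\<in>I. \<forall>a\<in>M i. consistent I le M R i (proj i i a) i a) \<and>
     (\<forall>i\<in>I. \<forall>i'\<in>I. \<forall>i''\<in>I. le i i' \<and> le i' i'' \<longrightarrow> (\<forall>a\<in>M i''.
        consistent I le M R i (proj i' i (proj i'' i' a)) i (proj i'' i a)))"

definition coherent_projections where
  "coherent_projections I le M R proj \<longleftrightarrow>
     (\<forall>i\<in>I. \<forall>i'\<in>I. \<forall>i''\<in>I. le i i' \<and> le i' i'' \<longrightarrow>
        (\<forall>a''\<in>M i''. \<forall>a\<in>M i. R i'' i a'' a \<longrightarrow> R i' i (proj i'' i' a'') a))"

definition emb_proj_pair where
  "emb_proj_pair I le M R emb proj \<longleftrightarrow>
     cons_embeddings I le M R emb \<and> cons_projections I le M R proj \<and>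
     (\<forall>i\<in>I. \<forall>i'\<in>I. le i i' \<longrightarrow>
        (\<forall>a\<in>M i. consistent I le M R i (proj i' i (emb i i' a)) i a))"

definition factor_system where
  "factor_system I le M R \<longleftrightarrow> prefactor_system I le M R \<and>
     (\<exists>emb proj. emb_proj_pair I le M R emb proj \<and>
        coherent_embeddings I le M R emb \<and> coherent_projections I le M R proj)"

definition direct_system where
  "direct_system I le M R \<longleftrightarrow> prefactor_system I le M R \<and>
     (\<exists>emb. cons_embeddings I le M R emb \<and> coherent_embeddings I le M R emb \<and>
        (\<forall>i\<in>I. \<forall>i'\<in>I. le i i' \<longrightarrow> (\<forall>a'\<in>M i'. \<forall>a\<in>M i.
           R i' i a' a \<longleftrightarrow> consistent I le M R i' a' i' (emb i i' a))))"

definition inverse_system where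
  "inverse_system I le M R \<longleftrightarrow> prefactor_system I le M R \<and>
     (\<exists>proj. cons_projections I le M R proj \<and> coherent_projections I le M R proj \<and>
        (\<forall>i\<in>I. \<forall>i'\<in>I. le i i' \<longrightarrow> (\<forall>a'\<in>M i'. \<forall>a\<in>M i.
           R i' i a' a \<longleftrightarrow> consistent I le M R i (proj i' i a') i a)))"

definition fs_le :: "('i \<Rightarrow> 'i \<Rightarrow> bool) \<Rightarrow> ('j \<Rightarrow> 'j \<Rightarrow> bool) \<Rightarrow> 'i \<times> 'j \<Rightarrow> 'i \<times> 'j \<Rightarrow> bool" where
  "fs_le leI leJ p q \<longleftrightarrow> leI (fst p) (fst q) \<and> leJ (snd p) (snd q)"

definition fs_states where
  "fs_states I leI M R J leJ N S p =
     {f \<in> M (fst p) \<rightarrow>\<^sub>E N (snd p).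
        \<forall>a\<in>M (fst p). \<forall>b\<in>M (fst p). consistent I leI M R (fst p) a (fst p) b \<longrightarrow>
           consistent J leJ N S (snd p) (f a) (snd p) (f b)}"

definition fs_rel where
  "fs_rel I leI M R J leJ N S q p f' f \<longleftrightarrow>
     q \<in> I \<times> J \<and> p \<in> I \<times> J \<and> fs_le leI leJ p q \<and>
     f' \<in> fs_states I leI M R J leJ N S q \<and> f \<in> fs_states I leI M R J leJ N S p \<and>
     (\<forall>a'\<in>M (fst q). \<forall>a\<in>M (fst p). R (fst q) (fst p) a' a \<longrightarrow>
        S (snd q) (snd p) (f' a') (f a))"

end

theory Submission
  imports Defs
begin


locale pfs =
  fixes I :: "'i set" and le :: "'i \<Rightarrow> 'i \<Rightarrow> bool" and M :: "'i \<Rightarrow> 'a set"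
    and R :: "'i \<Rightarrow> 'i \<Rightarrow> 'a \<Rightarrow> 'a \<Rightarrow> bool"
  assumes pf: "prefactor_system I le M R"
begin

lemma dom: "R i' i a' a \<Longrightarrow> i' \<in> I \<and> i \<in> I \<and> le i i' \<and> a' \<in> M i' \<and> a \<in> M i"
  using pf unfolding prefactor_system_def is_system_def by blast

lemma rrefl: "i \<in> I \<Longrightarrow> a \<in> M i \<Longrightarrow> R i i a a"
  using pf unfolding prefactor_system_def is_system_def by blast

lemma le_refl: "i \<in> I \<Longrightarrow> le i i"
  using pf unfolding prefactor_system_def is_system_def directed_preorder_def by blast

lemma le_trans: "i \<in> I \<Longrightarrow> j \<in> I \<Longrightarrow> k \<in> I \<Longrightarrow> le i j \<Longrightarrow> le j k \<Longrightarrow> le i k"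
  using pf unfolding prefactor_system_def is_system_def directed_preorder_def by blast

lemma cons_iff: "i \<in> I \<Longrightarrow> i' \<in> I \<Longrightarrow> le i i' \<Longrightarrow> a' \<in> M i' \<Longrightarrow> a \<in> M i \<Longrightarrow>
   consistent I le M R i' a' i a \<longleftrightarrow> R i' i a' a"
  using pf unfolding prefactor_system_def by blast

lemma C_iff: "i \<in> I \<Longrightarrow> a \<in> M i \<Longrightarrow> b \<in> M i \<Longrightarrow> consistent I le M R i a i b \<longleftrightarrow> R i i a b"
  using cons_iff le_refl by blast

lemma C_iff': "consistent I le M R i a i b \<longleftrightarrow> i \<in> I \<and> a \<in> M i \<and> b \<in> M i \<and> R i i a b"
proof
  assume "consistent I le M R i a i b"
  then obtain k c where "k \<in> I" "R k i c a" "R k i c b" unfolding consistent_def by blast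
  then show "i \<in> I \<and> a \<in> M i \<and> b \<in> M i \<and> R i i a b" using dom C_iff
    by (meson \<open>consistent I le M R i a i b\<close>)
qed (use C_iff in blast)

lemma rsym: "R i i a b \<Longrightarrow> R i i b a"
proof -
  assume h: "R i i a b"
  then have "i \<in> I" "a \<in> M i" "b \<in> M i" using dom by auto
  then have "consistent I le M R i b i a" unfolding consistent_def using h rrefl le_refl by blast
  then show ?thesis using C_iff' by blast
qed

lemma rtrans: "R i i a b \<Longrightarrow> R i i b c \<Longrightarrow> R i i a c"
proof -
  assume h: "R i i a b" "R i i b c"
  then have "i \<in> I" "a \<in> M i" "b \<in> M i" "c \<in> M i" using dom by auto
  then have "consistent I le M R i a i c" unfolding consistent_def using h rsym le_refl by blast
  then show ?thesis using C_iff' by blast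
qed

lemma cons_embD:
  assumes h: "cons_embeddings I le M R emb"
  shows "i \<in> I \<Longrightarrow> i' \<in> I \<Longrightarrow> le i i' \<Longrightarrow> a \<in> M i \<Longrightarrow> emb i i' a \<in> M i'"
    and "i' \<in> I \<Longrightarrow> le i i' \<Longrightarrow> R i i a b \<Longrightarrow> R i' i' (emb i i' a) (emb i i' b)"
    and "i \<in> I \<Longrightarrow> a \<in> M i \<Longrightarrow> R i i (emb i i a) a"
    and "i \<in> I \<Longrightarrow> i' \<in> I \<Longrightarrow> i'' \<in> I \<Longrightarrow> le i i' \<Longrightarrow> le i' i'' \<Longrightarrow> a \<in> M i \<Longrightarrow>
         R i'' i'' (emb i' i'' (emb i i' a)) (emb i i'' a)"
proof -
  have h1: "\<And>i i' a. i \<in> I \<Longrightarrow> i' \<in> I \<Longrightarrow> le i i' \<Longrightarrow> a \<in> M i \<Longrightarrow> emb i i' a \<in> M i'"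
    using h unfolding cons_embeddings_def by blast
  show "i \<in> I \<Longrightarrow> i' \<in> I \<Longrightarrow> le i i' \<Longrightarrow> a \<in> M i \<Longrightarrow> emb i i' a \<in> M i'" by (rule h1)
  show "i' \<in> I \<Longrightarrow> le i i' \<Longrightarrow> R i i a b \<Longrightarrow> R i' i' (emb i i' a) (emb i i' b)"
  proof -
    assume a: "i' \<in> I" "le i i'" "R i i a b"
    from dom[OF a(3)] have d: "i \<in> I" "a \<in> M i" "b \<in> M i" by auto
    have "consistent I le M R i a i b" using C_iff d a by blast
    then have "consistent I le M R i' (emb i i' a) i' (emb i i' b)"
      using h unfolding cons_embeddings_def using d a by blast
    then show ?thesis using C_iff' by blast
  qed
  show "i \<in> I \<Longrightarrow> a \<in> M i \<Longrightarrow> R i i (emb i i a) a"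
  proof -
    assume a: "i \<in> I" "a \<in> M i"
    have "consistent I le M R i (emb i i a) i a"
      using h unfolding cons_embeddings_def using a by blast
    then show ?thesis using C_iff' by blast
  qed
  show "i \<in> I \<Longrightarrow> i' \<in> I \<Longrightarrow> i'' \<in> I \<Longrightarrow> le i i' \<Longrightarrow> le i' i'' \<Longrightarrow> a \<in> M i \<Longrightarrow>
         R i'' i'' (emb i' i'' (emb i i' a)) (emb i i'' a)"
  proof -
    assume a: "i \<in> I" "i' \<in> I" "i'' \<in> I" "le i i'" "le i' i''" "a \<in> M i"
    have "consistent I le M R i'' (emb i' i'' (emb i i' a)) i'' (emb i i'' a)"
      using h unfolding cons_embeddings_def using a by blast
    then show ?thesis using C_iff' by blast
  qed
qed

lemma cons_embI:
  assumes h1: "\<And>i i' a. i \<in> I \<Longrightarrow> i' \<in> I \<Longrightarrow> le i i' \<Longrightarrow> a \<in> M i \<Longrightarrow> emb i i' a \<in> M i'"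
    and h2: "\<And>i i' a b. i \<in> I \<Longrightarrow> i' \<in> I \<Longrightarrow> le i i' \<Longrightarrow> R i i a b \<Longrightarrow> R i' i' (emb i i' a) (emb i i' b)"
    and h3: "\<And>i a. i \<in> I \<Longrightarrow> a \<in> M i \<Longrightarrow> R i i (emb i i a) a"
    and h4: "\<And>i i' i'' a. i \<in> I \<Longrightarrow> i' \<in> I \<Longrightarrow> i'' \<in> I \<Longrightarrow> le i i' \<Longrightarrow> le i' i'' \<Longrightarrow> a \<in> M i \<Longrightarrow>
         R i'' i'' (emb i' i'' (emb i i' a)) (emb i i'' a)"
  shows "cons_embeddings I le M R emb"
  unfolding cons_embeddings_def
proof (intro conjI ballI impI)
  fix i i' a assume "i \<in> I" "i' \<in> I" "le i i'" "a \<in> M i" then show "emb i i' a \<in> M i'" by (rule h1)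
next
  fix i i' a b assume a: "i \<in> I" "i' \<in> I" "le i i'" "consistent I le M R i a i b"
  then have "R i i a b" using C_iff' by blast
  then have "R i' i' (emb i i' a) (emb i i' b)" using h2 a by blast
  then show "consistent I le M R i' (emb i i' a) i' (emb i i' b)" using C_iff' dom by blast
next
  fix i a assume "i \<in> I" "a \<in> M i"
  then have "R i i (emb i i a) a" by (rule h3)
  then show "consistent I le M R i (emb i i a) i a" using C_iff' dom by blast
next
  fix i i' i'' a assume a: "i \<in> I" "i' \<in> I" "i'' \<in> I" "le i i' \<and> le i' i''" "a \<in> M i"
  then have "R i'' i'' (emb i' i'' (emb i i' a)) (emb i i'' a)" using h4 by blast
  then show "consistent I le M R i'' (emb i' i'' (emb i i' a)) i'' (emb i i'' a)" using C_iff' dom by blast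
qed

lemma cons_projD:
  assumes h: "cons_projections I le M R proj"
  shows "i \<in> I \<Longrightarrow> i' \<in> I \<Longrightarrow> le i i' \<Longrightarrow> a \<in> M i' \<Longrightarrow> proj i' i a \<in> M i"
    and "i \<in> I \<Longrightarrow> le i i' \<Longrightarrow> R i' i' a b \<Longrightarrow> R i i (proj i' i a) (proj i' i b)"
    and "i \<in> I \<Longrightarrow> a \<in> M i \<Longrightarrow> R i i (proj i i a) a"
    and "i \<in> I \<Longrightarrow> i' \<in> I \<Longrightarrow> i'' \<in> I \<Longrightarrow> le i i' \<Longrightarrow> le i' i'' \<Longrightarrow> a \<in> M i'' \<Longrightarrow>
         R i i (proj i' i (proj i'' i' a)) (proj i'' i a)"
proof -
  have h1: "\<And>i i' a. i \<in> I \<Longrightarrow> i' \<in> I \<Longrightarrow> le i i' \<Longrightarrow> a \<in> M i' \<Longrightarrow> proj i' i a \<in> M i"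
    using h unfolding cons_projections_def by blast
  show "i \<in> I \<Longrightarrow> i' \<in> I \<Longrightarrow> le i i' \<Longrightarrow> a \<in> M i' \<Longrightarrow> proj i' i a \<in> M i" by (rule h1)
  show "i \<in> I \<Longrightarrow> le i i' \<Longrightarrow> R i' i' a b \<Longrightarrow> R i i (proj i' i a) (proj i' i b)"
  proof -
    assume a: "i \<in> I" "le i i'" "R i' i' a b"
    from dom[OF a(3)] have d: "i' \<in> I" "a \<in> M i'" "b \<in> M i'" by auto
    have "consistent I le M R i' a i' b" using C_iff d a by blast
    then have "consistent I le M R i (proj i' i a) i (proj i' i b)"
      using h unfolding cons_projections_def using d a by blast
    then show ?thesis using C_iff' by blast
  qed
  show "i \<in> I \<Longrightarrow> a \<in> M i \<Longrightarrow> R i i (proj i i a) a"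
  proof -
    assume a: "i \<in> I" "a \<in> M i"
    have "consistent I le M R i (proj i i a) i a"
      using h unfolding cons_projections_def using a by blast
    then show ?thesis using C_iff' by blast
  qed
  show "i \<in> I \<Longrightarrow> i' \<in> I \<Longrightarrow> i'' \<in> I \<Longrightarrow> le i i' \<Longrightarrow> le i' i'' \<Longrightarrow> a \<in> M i'' \<Longrightarrow>
         R i i (proj i' i (proj i'' i' a)) (proj i'' i a)"
  proof -
    assume a: "i \<in> I" "i' \<in> I" "i'' \<in> I" "le i i'" "le i' i''" "a \<in> M i''"
    have "consistent I le M R i (proj i' i (proj i'' i' a)) i (proj i'' i a)"
      using h unfolding cons_projections_def using a by blast
    then show ?thesis using C_iff' by blast
  qed
qed

lemma cons_projI:
  assumes h1: "\<And>i i' a. i \<in> I \<Longrightarrow> i' \<in> I \<Longrightarrow> le i i' \<Longrightarrow> a \<in> M i' \<Longrightarrow> proj i' i a \<in> M i"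
    and h2: "\<And>i i' a b. i \<in> I \<Longrightarrow> i' \<in> I \<Longrightarrow> le i i' \<Longrightarrow> R i' i' a b \<Longrightarrow> R i i (proj i' i a) (proj i' i b)"
    and h3: "\<And>i a. i \<in> I \<Longrightarrow> a \<in> M i \<Longrightarrow> R i i (proj i i a) a"
    and h4: "\<And>i i' i'' a. i \<in> I \<Longrightarrow> i' \<in> I \<Longrightarrow> i'' \<in> I \<Longrightarrow> le i i' \<Longrightarrow> le i' i'' \<Longrightarrow> a \<in> M i'' \<Longrightarrow>
         R i i (proj i' i (proj i'' i' a)) (proj i'' i a)"
  shows "cons_projections I le M R proj"
  unfolding cons_projections_def
proof (intro conjI ballI impI)
  fix i i' a assume "i \<in> I" "i' \<in> I" "le i i'" "a \<in> M i'" then show "proj i' i a \<in> M i" by (rule h1)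
next
  fix i i' a b assume a: "i \<in> I" "i' \<in> I" "le i i'" "consistent I le M R i' a i' b"
  then have "R i' i' a b" using C_iff' by blast
  then have "R i i (proj i' i a) (proj i' i b)" using h2 a by blast
  then show "consistent I le M R i (proj i' i a) i (proj i' i b)" using C_iff' dom by blast
next
  fix i a assume "i \<in> I" "a \<in> M i"
  then have "R i i (proj i i a) a" by (rule h3)
  then show "consistent I le M R i (proj i i a) i a" using C_iff' dom by blast
next
  fix i i' i'' a assume a: "i \<in> I" "i' \<in> I" "i'' \<in> I" "le i i' \<and> le i' i''" "a \<in> M i''"
  then have "R i i (proj i' i (proj i'' i' a)) (proj i'' i a)" using h4 by blast
  then show "consistent I le M R i (proj i' i (proj i'' i' a)) i (proj i'' i a)" using C_iff' dom by blast
qed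

lemma dir: "i \<in> I \<Longrightarrow> j \<in> I \<Longrightarrow> \<exists>k\<in>I. le i k \<and> le j k"
  using pf unfolding prefactor_system_def is_system_def directed_preorder_def by blast

lemma nonempty: "I \<noteq> {}"
  using pf unfolding prefactor_system_def is_system_def directed_preorder_def by blast

lemma cohE_D: "coherent_embeddings I le M R emb \<Longrightarrow> R i' i a' a \<Longrightarrow> le i' i'' \<Longrightarrow> i'' \<in> I
   \<Longrightarrow> R i'' i (emb i' i'' a') a"
proof -
  assume h: "coherent_embeddings I le M R emb" "R i' i a' a" "le i' i''" "i'' \<in> I"
  from dom[OF h(2)] have d: "i' \<in> I" "i \<in> I" "le i i'" "a' \<in> M i'" "a \<in> M i" by auto
  show ?thesis by (rule h(1)[unfolded coherent_embeddings_def, rule_format]) (use d h(2-) in auto)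
qed

lemma cohE_I: assumes h: "(\<And>i i' i'' a' a. i \<in> I \<Longrightarrow> i' \<in> I \<Longrightarrow> i'' \<in> I \<Longrightarrow> le i i' \<Longrightarrow> le i' i''
    \<Longrightarrow> R i' i a' a \<Longrightarrow> R i'' i (emb i' i'' a') a)" shows "coherent_embeddings I le M R emb"
  unfolding coherent_embeddings_def by (intro ballI impI, erule conjE, rule h) assumption+

lemma cohP_D: "coherent_projections I le M R proj \<Longrightarrow> R i'' i a'' a \<Longrightarrow> le i i' \<Longrightarrow> le i' i''
   \<Longrightarrow> i' \<in> I \<Longrightarrow> R i' i (proj i'' i' a'') a"
proof -
  assume h: "coherent_projections I le M R proj" "R i'' i a'' a" "le i i'" "le i' i''" "i' \<in> I"
  from dom[OF h(2)] have d: "i'' \<in> I" "i \<in> I" "a'' \<in> M i''" "a \<in> M i" by auto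
  show ?thesis by (rule h(1)[unfolded coherent_projections_def, rule_format]) (use d h(2-) in auto)
qed

lemma cohP_I: assumes h: "(\<And>i i' i'' a'' a. i \<in> I \<Longrightarrow> i' \<in> I \<Longrightarrow> i'' \<in> I \<Longrightarrow> le i i' \<Longrightarrow> le i' i''
    \<Longrightarrow> R i'' i a'' a \<Longrightarrow> R i' i (proj i'' i' a'') a)" shows "coherent_projections I le M R proj"
  unfolding coherent_projections_def by (intro ballI impI, erule conjE, rule h) assumption+

lemma pair_D: "emb_proj_pair I le M R emb proj \<Longrightarrow> i \<in> I \<Longrightarrow> i' \<in> I \<Longrightarrow> le i i' \<Longrightarrow> a \<in> M i
   \<Longrightarrow> R i i (proj i' i (emb i i' a)) a"
proof -
  assume h: "emb_proj_pair I le M R emb proj" "i \<in> I" "i' \<in> I" "le i i'" "a \<in> M i"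
  have "consistent I le M R i (proj i' i (emb i i' a)) i a" using h unfolding emb_proj_pair_def by blast
  then show ?thesis using C_iff' by blast
qed

lemma direct_D:
  assumes "direct_system I le M R"
  obtains emb where "cons_embeddings I le M R emb" "coherent_embeddings I le M R emb"
    "\<And>i i' a' a. i \<in> I \<Longrightarrow> i' \<in> I \<Longrightarrow> le i i' \<Longrightarrow> a' \<in> M i' \<Longrightarrow> a \<in> M i \<Longrightarrow>
       R i' i a' a \<longleftrightarrow> R i' i' a' (emb i i' a)"
proof -
  from assms obtain emb where c: "cons_embeddings I le M R emb" "coherent_embeddings I le M R emb"
    and hh: "\<forall>i\<in>I. \<forall>i'\<in>I. le i i' \<longrightarrow> (\<forall>a'\<in>M i'. \<forall>a\<in>M i.
           R i' i a' a \<longleftrightarrow> consistent I le M R i' a' i' (emb i i' a))"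
    unfolding direct_system_def by blast
  show thesis
  proof (rule that[OF c])
    fix i i' a' a assume a: "i \<in> I" "i' \<in> I" "le i i'" "a' \<in> M i'" "a \<in> M i"
    have "emb i i' a \<in> M i'" using cons_embD(1)[OF c(1) a(1,2,3,5)] .
    then show "R i' i a' a \<longleftrightarrow> R i' i' a' (emb i i' a)" using hh a C_iff by blast
  qed
qed

lemma inverse_D:
  assumes "inverse_system I le M R"
  obtains proj where "cons_projections I le M R proj" "coherent_projections I le M R proj"
    "\<And>i i' a' a. i \<in> I \<Longrightarrow> i' \<in> I \<Longrightarrow> le i i' \<Longrightarrow> a' \<in> M i' \<Longrightarrow> a \<in> M i \<Longrightarrow>
       R i' i a' a \<longleftrightarrow> R i i (proj i' i a') a"
proof -
  from assms obtain proj where c: "cons_projections I le M R proj" "coherent_projections I le M R proj"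
    and hh: "\<forall>i\<in>I. \<forall>i'\<in>I. le i i' \<longrightarrow> (\<forall>a'\<in>M i'. \<forall>a\<in>M i.
           R i' i a' a \<longleftrightarrow> consistent I le M R i (proj i' i a') i a)"
    unfolding inverse_system_def by blast
  show thesis
  proof (rule that[OF c])
    fix i i' a' a assume a: "i \<in> I" "i' \<in> I" "le i i'" "a' \<in> M i'" "a \<in> M i"
    have "proj i' i a' \<in> M i" using cons_projD(1)[OF c(1) a(1,2,3,4)] .
    then show "R i' i a' a \<longleftrightarrow> R i i (proj i' i a') a" using hh a C_iff by blast
  qed
qed

lemma factor_D:
  assumes "factor_system I le M R"
  obtains emb proj where "emb_proj_pair I le M R emb proj" "coherent_embeddings I le M R emb"
    "coherent_projections I le M R proj"
  using assms unfolding factor_system_def by blast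

end



definition embF :: "('i \<Rightarrow> 'a set) \<Rightarrow> ('i \<Rightarrow> 'i \<Rightarrow> 'a \<Rightarrow> 'a) \<Rightarrow> ('j \<Rightarrow> 'j \<Rightarrow> 'b \<Rightarrow> 'b)
   \<Rightarrow> 'i \<times> 'j \<Rightarrow> 'i \<times> 'j \<Rightarrow> ('a \<Rightarrow> 'b) \<Rightarrow> 'a \<Rightarrow> 'b" where
  "embF M pM eN p q f = (\<lambda>a\<in>M (fst q). eN (snd p) (snd q) (f (pM (fst q) (fst p) a)))"

definition projF :: "('i \<Rightarrow> 'a set) \<Rightarrow> ('i \<Rightarrow> 'i \<Rightarrow> 'a \<Rightarrow> 'a) \<Rightarrow> ('j \<Rightarrow> 'j \<Rightarrow> 'b \<Rightarrow> 'b)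
   \<Rightarrow> 'i \<times> 'j \<Rightarrow> 'i \<times> 'j \<Rightarrow> ('a \<Rightarrow> 'b) \<Rightarrow> 'a \<Rightarrow> 'b" where
  "projF M eM pN q p f = (\<lambda>a\<in>M (fst p). pN (snd q) (snd p) (f (eM (fst p) (fst q) a)))"

locale fsp = Mx: pfs I leI M R + Nx: pfs J leJ N S
  for I :: "'i set" and leI M R and J :: "'j set" and leJ N S
begin

abbreviation "F \<equiv> fs_states I leI M R J leJ N S"
abbreviation "Rf \<equiv> fs_rel I leI M R J leJ N S"
abbreviation "LE \<equiv> fs_le leI leJ"

lemma F_iff: "f \<in> F (i,j) \<longleftrightarrow> f \<in> M i \<rightarrow>\<^sub>E N j \<and> (\<forall>a b. R i i a b \<longrightarrow> S j j (f a) (f b))"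
proof
  assume h: "f \<in> F (i,j)"
  then have f: "f \<in> M i \<rightarrow>\<^sub>E N j" unfolding fs_states_def by simp
  have "S j j (f a) (f b)" if r: "R i i a b" for a b
  proof -
    from Mx.dom[OF r] have "i \<in> I" "a \<in> M i" "b \<in> M i" by auto
    then have "consistent I leI M R i a i b" using r Mx.C_iff by blast
    then have "consistent J leJ N S j (f a) j (f b)" using h \<open>a \<in> M i\<close> \<open>b \<in> M i\<close>
      unfolding fs_states_def by auto
    then show ?thesis using Nx.C_iff' by blast
  qed
  then show "f \<in> M i \<rightarrow>\<^sub>E N j \<and> (\<forall>a b. R i i a b \<longrightarrow> S j j (f a) (f b))" using f by blast
next
  assume h: "f \<in> M i \<rightarrow>\<^sub>E N j \<and> (\<forall>a b. R i i a b \<longrightarrow> S j j (f a) (f b))"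
  have "consistent J leJ N S j (f a) j (f b)" if "consistent I leI M R i a i b" for a b
  proof -
    have "R i i a b" using that Mx.C_iff' by blast
    then have "S j j (f a) (f b)" using h by blast
    then show ?thesis using Nx.C_iff' Nx.dom by blast
  qed
  then show "f \<in> F (i,j)" using h unfolding fs_states_def by auto
qed

lemma F_app: "f \<in> F (i,j) \<Longrightarrow> a \<in> M i \<Longrightarrow> f a \<in> N j"
  unfolding F_iff by (auto simp: PiE_iff)

lemma F_R: "f \<in> F (i,j) \<Longrightarrow> R i i a b \<Longrightarrow> S j j (f a) (f b)"
  unfolding F_iff by blast

lemma F_ext: "f \<in> F (i,j) \<Longrightarrow> a \<notin> M i \<Longrightarrow> f a = undefined"
  unfolding F_iff by (auto simp: PiE_iff extensional_def)

lemma Rf_iff: "Rf (i',j') (i,j) f' f \<longleftrightarrow> i' \<in> I \<and> j' \<in> J \<and> i \<in> I \<and> j \<in> J \<and> leI i i' \<and> leJ j j'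
   \<and> f' \<in> F (i',j') \<and> f \<in> F (i,j) \<and> (\<forall>a' a. R i' i a' a \<longrightarrow> S j' j (f' a') (f a))"
proof -
  have "(\<forall>a'\<in>M i'. \<forall>a\<in>M i. R i' i a' a \<longrightarrow> S j' j (f' a') (f a)) \<longleftrightarrow>
        (\<forall>a' a. R i' i a' a \<longrightarrow> S j' j (f' a') (f a))" using Mx.dom by blast
  then show ?thesis unfolding fs_rel_def fs_le_def by auto
qed

lemma Rf_dom: "Rf q p f' f \<Longrightarrow> q \<in> I \<times> J \<and> p \<in> I \<times> J \<and> LE p q \<and> f' \<in> F q \<and> f \<in> F p"
  unfolding fs_rel_def by blast

lemma Rf_app: "Rf (i',j') (i,j) f' f \<Longrightarrow> R i' i a' a \<Longrightarrow> S j' j (f' a') (f a)"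
  unfolding Rf_iff by blast

lemma Rf_refl: "i \<in> I \<Longrightarrow> j \<in> J \<Longrightarrow> f \<in> F (i,j) \<Longrightarrow> Rf (i,j) (i,j) f f"
  unfolding Rf_iff using Mx.le_refl Nx.le_refl F_R by blast

lemma fs_system: "is_system (I \<times> J) LE F Rf"
  unfolding is_system_def
proof (intro conjI allI impI ballI)
  show "directed_preorder (I \<times> J) LE"
    unfolding directed_preorder_def fs_le_def
    apply (intro conjI)
    subgoal using Mx.nonempty Nx.nonempty by blast
    subgoal using Mx.le_refl Nx.le_refl by auto
    subgoal
    proof (intro ballI impI)
      fix p q r assume h: "p \<in> I \<times> J" "q \<in> I \<times> J" "r \<in> I \<times> J"
        "(leI (fst p) (fst q) \<and> leJ (snd p) (snd q)) \<and> leI (fst q) (fst r) \<and> leJ (snd q) (snd r)"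
      then show "leI (fst p) (fst r) \<and> leJ (snd p) (snd r)"
        using Mx.le_trans[of "fst p" "fst q" "fst r"] Nx.le_trans[of "snd p" "snd q" "snd r"]
        by (auto simp: mem_Times_iff)
    qed
    subgoal
    proof (intro ballI)
      fix p q assume "p \<in> I \<times> J" "q \<in> I \<times> J"
      then obtain k l where "k \<in> I" "l \<in> J" "leI (fst p) k" "leI (fst q) k" "leJ (snd p) l" "leJ (snd q) l"
        using Mx.dir Nx.dir by (metis mem_Times_iff)
      then show "\<exists>r\<in>I \<times> J. (leI (fst p) (fst r) \<and> leJ (snd p) (snd r)) \<and> leI (fst q) (fst r) \<and> leJ (snd q) (snd r)"
        by (intro bexI[of _ "(k,l)"]) auto
    qed
    done
next
  fix q p f' f assume "Rf q p f' f"
  then show "q \<in> I \<times> J" "p \<in> I \<times> J" "LE p q" "f' \<in> F q" "f \<in> F p" using Rf_dom by blast+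
next
  fix p f assume "p \<in> I \<times> J" "f \<in> F p"
  then show "Rf p p f f" using Rf_refl by (metis mem_Times_iff prod.collapse)
qed

lemma fs_prefactor:
  assumes ce: "cons_embeddings I leI M R eM" and he: "coherent_embeddings I leI M R eM"
  shows "prefactor_system (I \<times> J) LE F Rf"
  unfolding prefactor_system_def
proof (intro conjI ballI impI)
  show "is_system (I \<times> J) LE F Rf" by (rule fs_system)
next
  fix p q f' f assume pq: "p \<in> I \<times> J" "q \<in> I \<times> J" "LE p q" "f' \<in> F q" "f \<in> F p"
  obtain i j where p: "p = (i,j)" by force
  obtain i' j' where q: "q = (i',j')" by force
  have idx: "i \<in> I" "j \<in> J" "i' \<in> I" "j' \<in> J" "leI i i'" "leJ j j'"
    using pq unfolding p q fs_le_def by auto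
  show "consistent (I \<times> J) LE F Rf q f' p f \<longleftrightarrow> Rf q p f' f"
  proof
    assume "Rf q p f' f"
    moreover have "Rf q q f' f'" using Rf_refl idx pq q by blast
    moreover have "LE q q" using idx q Mx.le_refl Nx.le_refl unfolding fs_le_def by auto
    ultimately show "consistent (I \<times> J) LE F Rf q f' p f"
      unfolding consistent_def using pq by blast
  next
    assume "consistent (I \<times> J) LE F Rf q f' p f"
    then obtain k g where k: "k \<in> I \<times> J" "Rf k q g f'" "Rf k p g f"
      unfolding consistent_def by blast
    obtain ik jk where kk: "k = (ik,jk)" by force
    have kidx: "ik \<in> I" "jk \<in> J" "leI i' ik" "leJ j' jk"
      using k Rf_dom unfolding kk q fs_le_def by auto
    have "\<forall>a' a. R i' i a' a \<longrightarrow> S j' j (f' a') (f a)"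
    proof (intro allI impI)
      fix a' a assume r: "R i' i a' a"
      from Mx.dom[OF r] have d: "a' \<in> M i'" "a \<in> M i" by auto
      have r1: "R ik i' (eM i' ik a') a'" using Mx.cohE_D[OF he Mx.rrefl[OF idx(3) d(1)] kidx(3) kidx(1)] .
      have r2: "R ik i (eM i' ik a') a" using Mx.cohE_D[OF he r kidx(3) kidx(1)] .
      have s1: "S jk j' (g (eM i' ik a')) (f' a')" using Rf_app[OF k(2)[unfolded kk q] r1] .
      have s2: "S jk j (g (eM i' ik a')) (f a)" using Rf_app[OF k(3)[unfolded kk p] r2] .
      have "consistent J leJ N S j' (f' a') j (f a)"
        unfolding consistent_def using s1 s2 kidx Nx.dom[OF s2] by blast
      moreover have "f' a' \<in> N j'" "f a \<in> N j" using F_app pq d unfolding p q by auto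
      ultimately show "S j' j (f' a') (f a)" using Nx.cons_iff idx by blast
    qed
    then show "Rf q p f' f" unfolding p q Rf_iff using idx pq unfolding p q by blast
  qed
qed

end



context fsp begin

lemma embF_app: "a \<in> M i' \<Longrightarrow> embF M pM eN (i,j) (i',j') f a = eN j j' (f (pM i' i a))"
  by (simp add: embF_def)

lemma projF_app: "a \<in> M i \<Longrightarrow> projF M eM pN (i',j') (i,j) f a = pN j' j (f (eM i i' a))"
  by (simp add: projF_def)

lemma embF_F:
  assumes cp: "cons_projections I leI M R pM" and ce: "cons_embeddings J leJ N S eN"
    and idx: "i \<in> I" "i' \<in> I" "j \<in> J" "j' \<in> J" "leI i i'" "leJ j j'" and f: "f \<in> F (i,j)"
  shows "embF M pM eN (i,j) (i',j') f \<in> F (i',j')"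
  unfolding F_iff
proof (intro conjI allI impI)
  show "embF M pM eN (i,j) (i',j') f \<in> M i' \<rightarrow>\<^sub>E N j'"
  proof
    fix a assume a: "a \<in> M i'"
    have "pM i' i a \<in> M i" using Mx.cons_projD(1)[OF cp idx(1,2,5) a] .
    then have "f (pM i' i a) \<in> N j" using F_app f by blast
    then show "embF M pM eN (i,j) (i',j') f a \<in> N j'"
      unfolding embF_app[OF a] by (rule Nx.cons_embD(1)[OF ce idx(3,4,6)])
  next
    fix a assume "a \<notin> M i'" then show "embF M pM eN (i,j) (i',j') f a = undefined"
      by (simp add: embF_def)
  qed
next
  fix a b assume r: "R i' i' a b"
  from Mx.dom[OF r] have d: "a \<in> M i'" "b \<in> M i'" by auto
  have "R i i (pM i' i a) (pM i' i b)" using Mx.cons_projD(2)[OF cp idx(1,5) r] .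
  then have "S j j (f (pM i' i a)) (f (pM i' i b))" using F_R f by blast
  then have "S j' j' (eN j j' (f (pM i' i a))) (eN j j' (f (pM i' i b)))"
    using Nx.cons_embD(2)[OF ce idx(4,6)] by blast
  then show "S j' j' (embF M pM eN (i, j) (i', j') f a) (embF M pM eN (i, j) (i', j') f b)"
    unfolding embF_app[OF d(1)] embF_app[OF d(2)] .
qed

lemma projF_F:
  assumes ce: "cons_embeddings I leI M R eM" and cp: "cons_projections J leJ N S pN"
    and idx: "i \<in> I" "i' \<in> I" "j \<in> J" "j' \<in> J" "leI i i'" "leJ j j'" and f: "f \<in> F (i',j')"
  shows "projF M eM pN (i',j') (i,j) f \<in> F (i,j)"
  unfolding F_iff
proof (intro conjI allI impI)
  show "projF M eM pN (i',j') (i,j) f \<in> M i \<rightarrow>\<^sub>E N j"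
  proof
    fix a assume a: "a \<in> M i"
    have "eM i i' a \<in> M i'" using Mx.cons_embD(1)[OF ce idx(1,2,5) a] .
    then have "f (eM i i' a) \<in> N j'" using F_app f by blast
    then show "projF M eM pN (i',j') (i,j) f a \<in> N j"
      unfolding projF_app[OF a] by (rule Nx.cons_projD(1)[OF cp idx(3,4,6)])
  next
    fix a assume "a \<notin> M i" then show "projF M eM pN (i',j') (i,j) f a = undefined"
      by (simp add: projF_def)
  qed
next
  fix a b assume r: "R i i a b"
  from Mx.dom[OF r] have d: "a \<in> M i" "b \<in> M i" by auto
  have "R i' i' (eM i i' a) (eM i i' b)" using Mx.cons_embD(2)[OF ce idx(2,5) r] .
  then have "S j' j' (f (eM i i' a)) (f (eM i i' b))" using F_R f by blast
  then have "S j j (pN j' j (f (eM i i' a))) (pN j' j (f (eM i i' b)))"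
    using Nx.cons_projD(2)[OF cp idx(3,6)] by blast
  then show "S j j (projF M eM pN (i',j') (i,j) f a) (projF M eM pN (i',j') (i,j) f b)"
    unfolding projF_app[OF d(1)] projF_app[OF d(2)] .
qed

end



context fsp begin
lemma Rf_I: "i' \<in> I \<Longrightarrow> j' \<in> J \<Longrightarrow> i \<in> I \<Longrightarrow> j \<in> J \<Longrightarrow> leI i i' \<Longrightarrow> leJ j j' \<Longrightarrow>
  f' \<in> F (i',j') \<Longrightarrow> f \<in> F (i,j) \<Longrightarrow> (\<And>a' a. R i' i a' a \<Longrightarrow> S j' j (f' a') (f a)) \<Longrightarrow> Rf (i',j') (i,j) f' f"
  unfolding Rf_iff by blast
end

locale fsp2 = fsp +
  assumes fpf: "prefactor_system (I \<times> J) (fs_le leI leJ) (fs_states I leI M R J leJ N S) (fs_rel I leI M R J leJ N S)"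
begin

sublocale Fx: pfs "I \<times> J" "fs_le leI leJ" "fs_states I leI M R J leJ N S" "fs_rel I leI M R J leJ N S"
  by (rule pfs.intro, rule fpf)

lemma embF_cons:
  assumes cp: "cons_projections I leI M R pM" and ce: "cons_embeddings J leJ N S eN"
  shows "cons_embeddings (I \<times> J) LE F Rf (embF M pM eN)"
proof (rule Fx.cons_embI)
  fix p q f assume h: "p \<in> I \<times> J" "q \<in> I \<times> J" "LE p q" "f \<in> F p"
  obtain i j where p: "p = (i,j)" by force
  obtain i' j' where q: "q = (i',j')" by force
  show "embF M pM eN p q f \<in> F q"
  proof -
    have idx: "i \<in> I" "i' \<in> I" "j \<in> J" "j' \<in> J" "leI i i'" "leJ j j'"
      using h unfolding p q fs_le_def by auto
    show ?thesis using embF_F[OF cp ce idx] h(4) unfolding p q by blast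
  qed
next
  fix p q f g assume h: "p \<in> I \<times> J" "q \<in> I \<times> J" "LE p q" "Rf p p f g"
  obtain i j where p: "p = (i,j)" by force
  obtain i' j' where q: "q = (i',j')" by force
  have idx: "i \<in> I" "i' \<in> I" "j \<in> J" "j' \<in> J" "leI i i'" "leJ j j'"
    using h unfolding p q fs_le_def by auto
  have fg: "f \<in> F (i,j)" "g \<in> F (i,j)" using Rf_dom[OF h(4)] p by auto
  have "\<forall>a' a. R i' i' a' a \<longrightarrow> S j' j' (embF M pM eN (i,j) (i',j') f a') (embF M pM eN (i,j) (i',j') g a)"
  proof (intro allI impI)
    fix a' a assume r: "R i' i' a' a"
    from Mx.dom[OF r] have d: "a' \<in> M i'" "a \<in> M i'" by auto
    have "R i i (pM i' i a') (pM i' i a)" using Mx.cons_projD(2)[OF cp idx(1,5) r] .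
    then have "S j j (f (pM i' i a')) (g (pM i' i a))" using Rf_app h(4) p by blast
    then show "S j' j' (embF M pM eN (i,j) (i',j') f a') (embF M pM eN (i,j) (i',j') g a)"
      unfolding embF_app[OF d(1)] embF_app[OF d(2)] by (rule Nx.cons_embD(2)[OF ce idx(4,6)])
  qed
  then show "Rf q q (embF M pM eN p q f) (embF M pM eN p q g)"
    unfolding p q by (intro Rf_I) (use idx embF_F[OF cp ce idx fg(1)] embF_F[OF cp ce idx fg(2)] Mx.le_refl Nx.le_refl in auto)
next
  fix p f assume h: "p \<in> I \<times> J" "f \<in> F p"
  obtain i j where p: "p = (i,j)" by force
  have idx: "i \<in> I" "j \<in> J" using h p by auto
  have f: "f \<in> F (i,j)" using h p by simp
  have "\<forall>a' a. R i i a' a \<longrightarrow> S j j (embF M pM eN (i,j) (i,j) f a') (f a)"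
  proof (intro allI impI)
    fix a' a assume r: "R i i a' a"
    from Mx.dom[OF r] have d: "a' \<in> M i" "a \<in> M i" by auto
    have "R i i (pM i i a') a" using Mx.rtrans[OF Mx.cons_projD(3)[OF cp idx(1) d(1)] r] .
    then have s: "S j j (f (pM i i a')) (f a)" using F_R f by blast
    have "pM i i a' \<in> M i" using Mx.cons_projD(1)[OF cp idx(1,1) Mx.le_refl[OF idx(1)] d(1)] .
    then have "f (pM i i a') \<in> N j" using F_app f by blast
    then have "S j j (eN j j (f (pM i i a'))) (f (pM i i a'))" using Nx.cons_embD(3)[OF ce idx(2)] by blast
    then show "S j j (embF M pM eN (i,j) (i,j) f a') (f a)"
      unfolding embF_app[OF d(1)] using Nx.rtrans s by blast
  qed
  then show "Rf p p (embF M pM eN p p f) f"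
    unfolding p by (intro Rf_I) (use idx embF_F[OF cp ce idx(1,1,2,2) Mx.le_refl[OF idx(1)] Nx.le_refl[OF idx(2)] f] f Mx.le_refl Nx.le_refl in auto)
next
  fix p q r f assume h: "p \<in> I \<times> J" "q \<in> I \<times> J" "r \<in> I \<times> J" "LE p q" "LE q r" "f \<in> F p"
  obtain i j where p: "p = (i,j)" by force
  obtain i' j' where q: "q = (i',j')" by force
  obtain i'' j'' where rr: "r = (i'',j'')" by force
  have idx0: "i \<in> I" "i' \<in> I" "j \<in> J" "j' \<in> J" "leI i i'" "leJ j j'"
     "i'' \<in> I" "j'' \<in> J" "leI i' i''" "leJ j' j''"
    using h unfolding p q rr fs_le_def by auto
  have idx: "i \<in> I" "i' \<in> I" "j \<in> J" "j' \<in> J" "leI i i'" "leJ j j'"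
     "i'' \<in> I" "j'' \<in> J" "leI i' i''" "leJ j' j''" "leI i i''" "leJ j j''"
    using idx0 Mx.le_trans[OF idx0(1,2,7,5,9)] Nx.le_trans[OF idx0(3,4,8,6,10)] by auto
  have f: "f \<in> F (i,j)" using h p by simp
  have g: "embF M pM eN (i,j) (i',j') f \<in> F (i',j')" using embF_F[OF cp ce idx(1-6) f] .
  have g2: "embF M pM eN (i',j') (i'',j'') (embF M pM eN (i,j) (i',j') f) \<in> F (i'',j'')"
    using embF_F[OF cp ce idx(2,7,4,8,9,10) g] .
  have g3: "embF M pM eN (i,j) (i'',j'') f \<in> F (i'',j'')" using embF_F[OF cp ce idx(1,7,3,8,11,12) f] .
  have "\<forall>a' a. R i'' i'' a' a \<longrightarrow> S j'' j'' (embF M pM eN (i',j') (i'',j'') (embF M pM eN (i,j) (i',j') f) a')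
           (embF M pM eN (i,j) (i'',j'') f a)"
  proof (intro allI impI)
    fix a' a assume r: "R i'' i'' a' a"
    from Mx.dom[OF r] have d: "a' \<in> M i''" "a \<in> M i''" by auto
    have d1: "pM i'' i' a' \<in> M i'" using Mx.cons_projD(1)[OF cp idx(2,7,9) d(1)] .
    have x1: "R i i (pM i' i (pM i'' i' a')) (pM i'' i a')" using Mx.cons_projD(4)[OF cp idx(1,2,7,5,9) d(1)] .
    have x2: "R i i (pM i'' i a') (pM i'' i a)" using Mx.cons_projD(2)[OF cp idx(1,11) r] .
    have "S j j (f (pM i' i (pM i'' i' a'))) (f (pM i'' i a))" using F_R[OF f Mx.rtrans[OF x1 x2]] .
    then have "S j' j' (eN j j' (f (pM i' i (pM i'' i' a')))) (eN j j' (f (pM i'' i a)))"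
      using Nx.cons_embD(2)[OF ce idx(4,6)] by blast
    then have s1: "S j'' j'' (eN j' j'' (eN j j' (f (pM i' i (pM i'' i' a'))))) (eN j' j'' (eN j j' (f (pM i'' i a))))"
      using Nx.cons_embD(2)[OF ce idx(8,10)] by blast
    have "pM i'' i a \<in> M i" using Mx.cons_projD(1)[OF cp idx(1,7,11) d(2)] .
    then have "f (pM i'' i a) \<in> N j" using F_app f by blast
    then have s2: "S j'' j'' (eN j' j'' (eN j j' (f (pM i'' i a)))) (eN j j'' (f (pM i'' i a)))"
      using Nx.cons_embD(4)[OF ce idx(3,4,8,6,10)] by blast
    show "S j'' j'' (embF M pM eN (i',j') (i'',j'') (embF M pM eN (i,j) (i',j') f) a')
           (embF M pM eN (i,j) (i'',j'') f a)"
      unfolding embF_app[OF d(1)] embF_app[OF d(2)] embF_app[OF d1] using Nx.rtrans[OF s1 s2] .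
  qed
  then show "Rf r r (embF M pM eN q r (embF M pM eN p q f)) (embF M pM eN p r f)"
    unfolding p q rr by (intro Rf_I) (use idx g2 g3 Mx.le_refl Nx.le_refl in auto)
qed


lemma projF_cons:
  assumes ce: "cons_embeddings I leI M R eM" and cp: "cons_projections J leJ N S pN"
  shows "cons_projections (I \<times> J) LE F Rf (projF M eM pN)"
proof (rule Fx.cons_projI)
  fix p q f assume h: "p \<in> I \<times> J" "q \<in> I \<times> J" "LE p q" "f \<in> F q"
  obtain i j where p: "p = (i,j)" by force
  obtain i' j' where q: "q = (i',j')" by force
  show "projF M eM pN q p f \<in> F p"
  proof -
    have idx: "i \<in> I" "i' \<in> I" "j \<in> J" "j' \<in> J" "leI i i'" "leJ j j'"
      using h unfolding p q fs_le_def by auto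
    show ?thesis using projF_F[OF ce cp idx] h(4) unfolding p q by blast
  qed
next
  fix p q f g assume h: "p \<in> I \<times> J" "q \<in> I \<times> J" "LE p q" "Rf q q f g"
  obtain i j where p: "p = (i,j)" by force
  obtain i' j' where q: "q = (i',j')" by force
  have idx: "i \<in> I" "i' \<in> I" "j \<in> J" "j' \<in> J" "leI i i'" "leJ j j'"
    using h unfolding p q fs_le_def by auto
  have fg: "f \<in> F (i',j')" "g \<in> F (i',j')" using Rf_dom[OF h(4)] q by auto
  have "\<forall>a' a. R i i a' a \<longrightarrow> S j j (projF M eM pN (i',j') (i,j) f a') (projF M eM pN (i',j') (i,j) g a)"
  proof (intro allI impI)
    fix a' a assume r: "R i i a' a"
    from Mx.dom[OF r] have d: "a' \<in> M i" "a \<in> M i" by auto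
    have "R i' i' (eM i i' a') (eM i i' a)" using Mx.cons_embD(2)[OF ce idx(2,5) r] .
    then have "S j' j' (f (eM i i' a')) (g (eM i i' a))" using Rf_app h(4) q by blast
    then show "S j j (projF M eM pN (i',j') (i,j) f a') (projF M eM pN (i',j') (i,j) g a)"
      unfolding projF_app[OF d(1)] projF_app[OF d(2)] by (rule Nx.cons_projD(2)[OF cp idx(3,6)])
  qed
  then show "Rf p p (projF M eM pN q p f) (projF M eM pN q p g)"
    unfolding p q by (intro Rf_I) (use idx projF_F[OF ce cp idx fg(1)] projF_F[OF ce cp idx fg(2)] Mx.le_refl Nx.le_refl in auto)
next
  fix p f assume h: "p \<in> I \<times> J" "f \<in> F p"
  obtain i j where p: "p = (i,j)" by force
  have idx: "i \<in> I" "j \<in> J" using h p by auto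
  have f: "f \<in> F (i,j)" using h p by simp
  have "\<forall>a' a. R i i a' a \<longrightarrow> S j j (projF M eM pN (i,j) (i,j) f a') (f a)"
  proof (intro allI impI)
    fix a' a assume r: "R i i a' a"
    from Mx.dom[OF r] have d: "a' \<in> M i" "a \<in> M i" by auto
    have "R i i (eM i i a') a" using Mx.rtrans[OF Mx.cons_embD(3)[OF ce idx(1) d(1)] r] .
    then have s: "S j j (f (eM i i a')) (f a)" using F_R f by blast
    have "eM i i a' \<in> M i" using Mx.cons_embD(1)[OF ce idx(1,1) Mx.le_refl[OF idx(1)] d(1)] .
    then have "f (eM i i a') \<in> N j" using F_app f by blast
    then have "S j j (pN j j (f (eM i i a'))) (f (eM i i a'))" using Nx.cons_projD(3)[OF cp idx(2)] by blast
    then show "S j j (projF M eM pN (i,j) (i,j) f a') (f a)"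
      unfolding projF_app[OF d(1)] using Nx.rtrans s by blast
  qed
  then show "Rf p p (projF M eM pN p p f) f"
    unfolding p by (intro Rf_I) (use idx projF_F[OF ce cp idx(1,1,2,2) Mx.le_refl[OF idx(1)] Nx.le_refl[OF idx(2)] f] f Mx.le_refl Nx.le_refl in auto)
next
  fix p q r f assume h: "p \<in> I \<times> J" "q \<in> I \<times> J" "r \<in> I \<times> J" "LE p q" "LE q r" "f \<in> F r"
  obtain i j where p: "p = (i,j)" by force
  obtain i' j' where q: "q = (i',j')" by force
  obtain i'' j'' where rr: "r = (i'',j'')" by force
  have idx0: "i \<in> I" "i' \<in> I" "j \<in> J" "j' \<in> J" "leI i i'" "leJ j j'"
     "i'' \<in> I" "j'' \<in> J" "leI i' i''" "leJ j' j''"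
    using h unfolding p q rr fs_le_def by auto
  have idx: "i \<in> I" "i' \<in> I" "j \<in> J" "j' \<in> J" "leI i i'" "leJ j j'"
     "i'' \<in> I" "j'' \<in> J" "leI i' i''" "leJ j' j''" "leI i i''" "leJ j j''"
    using idx0 Mx.le_trans[OF idx0(1,2,7,5,9)] Nx.le_trans[OF idx0(3,4,8,6,10)] by auto
  have f: "f \<in> F (i'',j'')" using h rr by simp
  have g: "projF M eM pN (i'',j'') (i',j') f \<in> F (i',j')" using projF_F[OF ce cp idx(2,7,4,8,9,10) f] .
  have g2: "projF M eM pN (i',j') (i,j) (projF M eM pN (i'',j'') (i',j') f) \<in> F (i,j)"
    using projF_F[OF ce cp idx(1-6) g] .
  have g3: "projF M eM pN (i'',j'') (i,j) f \<in> F (i,j)" using projF_F[OF ce cp idx(1,7,3,8,11,12) f] .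
  have "\<forall>a' a. R i i a' a \<longrightarrow> S j j (projF M eM pN (i',j') (i,j) (projF M eM pN (i'',j'') (i',j') f) a')
           (projF M eM pN (i'',j'') (i,j) f a)"
  proof (intro allI impI)
    fix a' a assume r: "R i i a' a"
    from Mx.dom[OF r] have d: "a' \<in> M i" "a \<in> M i" by auto
    have d1: "eM i i' a' \<in> M i'" using Mx.cons_embD(1)[OF ce idx(1,2,5) d(1)] .
    have x1: "R i'' i'' (eM i' i'' (eM i i' a')) (eM i i'' a')" using Mx.cons_embD(4)[OF ce idx(1,2,7,5,9) d(1)] .
    have x2: "R i'' i'' (eM i i'' a') (eM i i'' a)" using Mx.cons_embD(2)[OF ce idx(7,11) r] .
    have "S j'' j'' (f (eM i' i'' (eM i i' a'))) (f (eM i i'' a))" using F_R[OF f Mx.rtrans[OF x1 x2]] .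
    then have "S j' j' (pN j'' j' (f (eM i' i'' (eM i i' a')))) (pN j'' j' (f (eM i i'' a)))"
      using Nx.cons_projD(2)[OF cp idx(4,10)] by blast
    then have s1: "S j j (pN j' j (pN j'' j' (f (eM i' i'' (eM i i' a'))))) (pN j' j (pN j'' j' (f (eM i i'' a))))"
      using Nx.cons_projD(2)[OF cp idx(3,6)] by blast
    have "eM i i'' a \<in> M i''" using Mx.cons_embD(1)[OF ce idx(1,7,11) d(2)] .
    then have "f (eM i i'' a) \<in> N j''" using F_app f by blast
    then have s2: "S j j (pN j' j (pN j'' j' (f (eM i i'' a)))) (pN j'' j (f (eM i i'' a)))"
      using Nx.cons_projD(4)[OF cp idx(3,4,8,6,10)] by blast
    show "S j j (projF M eM pN (i',j') (i,j) (projF M eM pN (i'',j'') (i',j') f) a')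
           (projF M eM pN (i'',j'') (i,j) f a)"
      unfolding projF_app[OF d(1)] projF_app[OF d(2)] projF_app[OF d1] using Nx.rtrans[OF s1 s2] .
  qed
  then show "Rf p p (projF M eM pN q p (projF M eM pN r q f)) (projF M eM pN r p f)"
    unfolding p q rr by (intro Rf_I) (use idx g2 g3 Mx.le_refl Nx.le_refl in auto)
qed

lemma embF_coh:
  assumes cp: "cons_projections I leI M R pM" and ce: "cons_embeddings J leJ N S eN"
    and hp: "coherent_projections I leI M R pM" and he: "coherent_embeddings J leJ N S eN"
  shows "coherent_embeddings (I \<times> J) LE F Rf (embF M pM eN)"
proof (rule Fx.cohE_I)
  fix p q r g f assume h: "p \<in> I \<times> J" "q \<in> I \<times> J" "r \<in> I \<times> J" "LE p q" "LE q r" "Rf q p g f"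
  obtain i j where p: "p = (i,j)" by force
  obtain i' j' where q: "q = (i',j')" by force
  obtain i'' j'' where rr: "r = (i'',j'')" by force
  have idx0: "i \<in> I" "i' \<in> I" "j \<in> J" "j' \<in> J" "leI i i'" "leJ j j'"
     "i'' \<in> I" "j'' \<in> J" "leI i' i''" "leJ j' j''"
    using h unfolding p q rr fs_le_def by auto
  have idx: "i \<in> I" "i' \<in> I" "j \<in> J" "j' \<in> J" "leI i i'" "leJ j j'"
     "i'' \<in> I" "j'' \<in> J" "leI i' i''" "leJ j' j''" "leI i i''" "leJ j j''"
    using idx0 Mx.le_trans[OF idx0(1,2,7,5,9)] Nx.le_trans[OF idx0(3,4,8,6,10)] by auto
  have gf: "g \<in> F (i',j')" "f \<in> F (i,j)" using Rf_dom[OF h(6)] p q by auto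
  have g2: "embF M pM eN (i',j') (i'',j'') g \<in> F (i'',j'')" using embF_F[OF cp ce idx(2,7,4,8,9,10) gf(1)] .
  have "\<forall>a'' a. R i'' i a'' a \<longrightarrow> S j'' j (embF M pM eN (i',j') (i'',j'') g a'') (f a)"
  proof (intro allI impI)
    fix a'' a assume r: "R i'' i a'' a"
    from Mx.dom[OF r] have d: "a'' \<in> M i''" "a \<in> M i" by auto
    have "R i' i (pM i'' i' a'') a" using Mx.cohP_D[OF hp r idx(5,9,2)] .
    then have "S j' j (g (pM i'' i' a'')) (f a)" using Rf_app h(6) p q by blast
    then show "S j'' j (embF M pM eN (i',j') (i'',j'') g a'') (f a)"
      unfolding embF_app[OF d(1)] using Nx.cohE_D[OF he _ idx(10,8)] by blast
  qed
  then show "Rf r p (embF M pM eN q r g) f"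
    unfolding p q rr by (intro Rf_I) (use idx g2 gf in auto)
qed

lemma projF_coh:
  assumes ce: "cons_embeddings I leI M R eM" and cp: "cons_projections J leJ N S pN"
    and he: "coherent_embeddings I leI M R eM" and hp: "coherent_projections J leJ N S pN"
  shows "coherent_projections (I \<times> J) LE F Rf (projF M eM pN)"
proof (rule Fx.cohP_I)
  fix p q r h f assume h: "p \<in> I \<times> J" "q \<in> I \<times> J" "r \<in> I \<times> J" "LE p q" "LE q r" "Rf r p h f"
  obtain i j where p: "p = (i,j)" by force
  obtain i' j' where q: "q = (i',j')" by force
  obtain i'' j'' where rr: "r = (i'',j'')" by force
  have idx0: "i \<in> I" "i' \<in> I" "j \<in> J" "j' \<in> J" "leI i i'" "leJ j j'"
     "i'' \<in> I" "j'' \<in> J" "leI i' i''" "leJ j' j''"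
    using h unfolding p q rr fs_le_def by auto
  have idx: "i \<in> I" "i' \<in> I" "j \<in> J" "j' \<in> J" "leI i i'" "leJ j j'"
     "i'' \<in> I" "j'' \<in> J" "leI i' i''" "leJ j' j''" "leI i i''" "leJ j j''"
    using idx0 Mx.le_trans[OF idx0(1,2,7,5,9)] Nx.le_trans[OF idx0(3,4,8,6,10)] by auto
  have hf: "h \<in> F (i'',j'')" "f \<in> F (i,j)" using Rf_dom[OF h(6)] p rr by auto
  have g2: "projF M eM pN (i'',j'') (i',j') h \<in> F (i',j')" using projF_F[OF ce cp idx(2,7,4,8,9,10) hf(1)] .
  have "\<forall>a' a. R i' i a' a \<longrightarrow> S j' j (projF M eM pN (i'',j'') (i',j') h a') (f a)"
  proof (intro allI impI)
    fix a' a assume r: "R i' i a' a"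
    from Mx.dom[OF r] have d: "a' \<in> M i'" "a \<in> M i" by auto
    have "R i'' i (eM i' i'' a') a" using Mx.cohE_D[OF he r idx(9,7)] .
    then have "S j'' j (h (eM i' i'' a')) (f a)" using Rf_app h(6) p rr by blast
    then show "S j' j (projF M eM pN (i'',j'') (i',j') h a') (f a)"
      unfolding projF_app[OF d(1)] using Nx.cohP_D[OF hp _ idx(6,10,4)] by blast
  qed
  then show "Rf q p (projF M eM pN r q h) f"
    unfolding p q rr by (intro Rf_I) (use idx g2 hf in auto)
qed


lemma fs_pair:
  assumes cpM: "cons_projections I leI M R pM" and ceM: "cons_embeddings I leI M R eM"
    and cpN: "cons_projections J leJ N S pN" and ceN: "cons_embeddings J leJ N S eN"
    and pairM: "emb_proj_pair I leI M R eM pM" and pairN: "emb_proj_pair J leJ N S eN pN"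
  shows "emb_proj_pair (I \<times> J) LE F Rf (embF M pM eN) (projF M eM pN)"
  unfolding emb_proj_pair_def
proof (intro conjI ballI impI)
  show "cons_embeddings (I \<times> J) LE F Rf (embF M pM eN)" by (rule embF_cons[OF cpM ceN])
  show "cons_projections (I \<times> J) LE F Rf (projF M eM pN)" by (rule projF_cons[OF ceM cpN])
next
  fix p q f assume h: "p \<in> I \<times> J" "q \<in> I \<times> J" "LE p q" "f \<in> F p"
  obtain i j where p: "p = (i,j)" by force
  obtain i' j' where q: "q = (i',j')" by force
  have idx: "i \<in> I" "i' \<in> I" "j \<in> J" "j' \<in> J" "leI i i'" "leJ j j'"
    using h unfolding p q fs_le_def by auto
  have f: "f \<in> F (i,j)" using h p by simp
  have g1: "embF M pM eN (i,j) (i',j') f \<in> F (i',j')" using embF_F[OF cpM ceN idx f] .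
  have g2: "projF M eM pN (i',j') (i,j) (embF M pM eN (i,j) (i',j') f) \<in> F (i,j)"
    using projF_F[OF ceM cpN idx g1] .
  have "Rf (i,j) (i,j) (projF M eM pN (i',j') (i,j) (embF M pM eN (i,j) (i',j') f)) f"
  proof (rule Rf_I[OF idx(1,3,1,3) Mx.le_refl[OF idx(1)] Nx.le_refl[OF idx(3)] g2 f])
    fix a' a assume r: "R i i a' a"
    from Mx.dom[OF r] have d: "a' \<in> M i" "a \<in> M i" by auto
    have d1: "eM i i' a' \<in> M i'" using Mx.cons_embD(1)[OF ceM idx(1,2,5) d(1)] .
    have x: "R i i (pM i' i (eM i i' a')) a'" using Mx.pair_D[OF pairM idx(1,2,5) d(1)] .
    have s: "S j j (f (pM i' i (eM i i' a'))) (f a)" using F_R[OF f Mx.rtrans[OF x r]] .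
    have "pM i' i (eM i i' a') \<in> M i" using Mx.cons_projD(1)[OF cpM idx(1,2,5) d1] .
    then have "f (pM i' i (eM i i' a')) \<in> N j" using F_app f by blast
    then have "S j j (pN j' j (eN j j' (f (pM i' i (eM i i' a'))))) (f (pM i' i (eM i i' a')))"
      using Nx.pair_D[OF pairN idx(3,4,6)] by blast
    then show "S j j (projF M eM pN (i',j') (i,j) (embF M pM eN (i,j) (i',j') f) a') (f a)"
      unfolding projF_app[OF d(1)] embF_app[OF d1] using Nx.rtrans s by blast
  qed
  then show "consistent (I \<times> J) LE F Rf p (projF M eM pN q p (embF M pM eN p q f)) p f"
    unfolding p q using Fx.C_iff' idx g2 f by blast
qed

lemma fs_Fun:
  assumes hfun: "cond_Fun J leJ N S"
  shows "cond_Fun (I \<times> J) LE F Rf"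
  unfolding cond_Fun_def
proof (intro ballI conjI)
  fix p f g assume h: "p \<in> I \<times> J" "f \<in> F p" "g \<in> F p"
  then show "consistent (I \<times> J) LE F Rf p f p g \<longleftrightarrow> Rf p p f g" using Fx.C_iff by blast
  obtain i j where p: "p = (i,j)" by force
  have idx: "i \<in> I" "j \<in> J" using h p by auto
  have fg: "f \<in> F (i,j)" "g \<in> F (i,j)" using h p by auto
  show "Rf p p f g \<longleftrightarrow> f = g"
  proof
    assume r: "Rf p p f g"
    show "f = g"
    proof (rule PiE_ext)
      show "f \<in> M i \<rightarrow>\<^sub>E N j" "g \<in> M i \<rightarrow>\<^sub>E N j" using fg F_iff by blast+
    next
      fix a assume a: "a \<in> M i"
      have "S j j (f a) (g a)" using Rf_app[OF r[unfolded p] Mx.rrefl[OF idx(1) a]] .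
      moreover have "f a \<in> N j" "g a \<in> N j" using F_app fg a by blast+
      ultimately show "f a = g a" using hfun idx unfolding cond_Fun_def by blast
    qed
  next
    assume "f = g" then show "Rf p p f g" using Fx.rrefl h by blast
  qed
qed

lemma fs_Stab:
  assumes stab: "cond_Stab J leJ N S"
  shows "cond_Stab (I \<times> J) LE F Rf"
  unfolding cond_Stab_def
proof (intro ballI impI)
  fix p q h f g assume hh: "p \<in> I \<times> J" "q \<in> I \<times> J" "LE p q" "h \<in> F q" "f \<in> F p" "g \<in> F p"
    and c: "Rf q p h f \<and> consistent (I \<times> J) LE F Rf p f p g"
  obtain i j where p: "p = (i,j)" by force
  obtain i' j' where q: "q = (i',j')" by force
  have idx: "i \<in> I" "i' \<in> I" "j \<in> J" "j' \<in> J" "leI i i'" "leJ j j'"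
    using hh unfolding p q fs_le_def by auto
  have fg: "f \<in> F (i,j)" "g \<in> F (i,j)" "h \<in> F (i',j')" using hh p q by auto
  have rhf: "Rf (i',j') (i,j) h f" using c p q by simp
  have rfg: "Rf (i,j) (i,j) f g" using c Fx.C_iff' p by blast
  show "Rf q p h g" unfolding p q
  proof (rule Rf_I[OF idx(2,4,1,3,5,6) fg(3,2)])
    fix a' a assume r: "R i' i a' a"
    from Mx.dom[OF r] have d: "a' \<in> M i'" "a \<in> M i" by auto
    have s1: "S j' j (h a') (f a)" using Rf_app[OF rhf r] .
    have "S j j (f a) (g a)" using Rf_app[OF rfg Mx.rrefl[OF idx(1) d(2)]] .
    then have s2: "consistent J leJ N S j (f a) j (g a)" using Nx.C_iff' Nx.dom by blast
    have "h a' \<in> N j'" "f a \<in> N j" "g a \<in> N j" using F_app fg d by blast+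
    then show "S j' j (h a') (g a)" using stab s1 s2 idx unfolding cond_Stab_def by blast
  qed
qed


lemma fs_direct:
  assumes inv: "inverse_system I leI M R" and dir: "direct_system J leJ N S"
  shows "direct_system (I \<times> J) LE F Rf"
proof -
  obtain pM where cpM: "cons_projections I leI M R pM" and hpM: "coherent_projections I leI M R pM"
    and invM: "\<And>i i' a' a. i \<in> I \<Longrightarrow> i' \<in> I \<Longrightarrow> leI i i' \<Longrightarrow> a' \<in> M i' \<Longrightarrow> a \<in> M i \<Longrightarrow>
       R i' i a' a \<longleftrightarrow> R i i (pM i' i a') a"
    using Mx.inverse_D[OF inv] by blast
  obtain eN where ceN: "cons_embeddings J leJ N S eN" and heN: "coherent_embeddings J leJ N S eN"
    and dirN: "\<And>j j' b' b. j \<in> J \<Longrightarrow> j' \<in> J \<Longrightarrow> leJ j j' \<Longrightarrow> b' \<in> N j' \<Longrightarrow> b \<in> N j \<Longrightarrow>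
       S j' j b' b \<longleftrightarrow> S j' j' b' (eN j j' b)"
    using Nx.direct_D[OF dir] by blast
  have ch: "\<forall>p\<in>I \<times> J. \<forall>q\<in>I \<times> J. LE p q \<longrightarrow> (\<forall>f'\<in>F q. \<forall>f\<in>F p.
     Rf q p f' f \<longleftrightarrow> consistent (I \<times> J) LE F Rf q f' q (embF M pM eN p q f))"
  proof (intro ballI impI)
    fix p q f' f assume h: "p \<in> I \<times> J" "q \<in> I \<times> J" "LE p q" "f' \<in> F q" "f \<in> F p"
    obtain i j where p: "p = (i,j)" by force
    obtain i' j' where q: "q = (i',j')" by force
    have idx: "i \<in> I" "i' \<in> I" "j \<in> J" "j' \<in> J" "leI i i'" "leJ j j'"
      using h unfolding p q fs_le_def by auto
    have ff: "f' \<in> F (i',j')" "f \<in> F (i,j)" using h p q by auto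
    have g: "embF M pM eN (i,j) (i',j') f \<in> F (i',j')" using embF_F[OF cpM ceN idx ff(2)] .
    have c: "consistent (I \<times> J) LE F Rf q f' q (embF M pM eN p q f) \<longleftrightarrow>
        Rf (i',j') (i',j') f' (embF M pM eN (i,j) (i',j') f)"
      unfolding p q using Fx.C_iff' idx g ff by blast
    have "Rf (i',j') (i,j) f' f \<longleftrightarrow> Rf (i',j') (i',j') f' (embF M pM eN (i,j) (i',j') f)"
    proof
      assume r0: "Rf (i',j') (i,j) f' f"
      show "Rf (i',j') (i',j') f' (embF M pM eN (i,j) (i',j') f)"
      proof (rule Rf_I[OF idx(2,4,2,4) Mx.le_refl[OF idx(2)] Nx.le_refl[OF idx(4)] ff(1) g])
        fix a' a assume r: "R i' i' a' a"
        from Mx.dom[OF r] have d: "a' \<in> M i'" "a \<in> M i'" by auto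
        have pa: "pM i' i a \<in> M i" using Mx.cons_projD(1)[OF cpM idx(1,2,5) d(2)] .
        have "R i i (pM i' i a') (pM i' i a)" using Mx.cons_projD(2)[OF cpM idx(1,5) r] .
        then have "R i' i a' (pM i' i a)" using invM[OF idx(1,2,5) d(1) pa] by blast
        then have s: "S j' j (f' a') (f (pM i' i a))" using Rf_app[OF r0] by blast
        have "f' a' \<in> N j'" "f (pM i' i a) \<in> N j" using F_app ff d pa by blast+
        then have "S j' j' (f' a') (eN j j' (f (pM i' i a)))" using dirN[OF idx(3,4,6)] s by blast
        then show "S j' j' (f' a') (embF M pM eN (i,j) (i',j') f a)" unfolding embF_app[OF d(2)] .
      qed
    next
      assume r0: "Rf (i',j') (i',j') f' (embF M pM eN (i,j) (i',j') f)"
      show "Rf (i',j') (i,j) f' f"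
      proof (rule Rf_I[OF idx(2,4,1,3,5,6) ff])
        fix a' a assume r: "R i' i a' a"
        from Mx.dom[OF r] have d: "a' \<in> M i'" "a \<in> M i" by auto
        have pa: "pM i' i a' \<in> M i" using Mx.cons_projD(1)[OF cpM idx(1,2,5) d(1)] .
        have x: "R i i (pM i' i a') a" using invM[OF idx(1,2,5) d] r by blast
        have s1: "S j' j' (f' a') (eN j j' (f (pM i' i a')))"
          using Rf_app[OF r0 Mx.rrefl[OF idx(2) d(1)]] unfolding embF_app[OF d(1)] .
        have "S j j (f (pM i' i a')) (f a)" using F_R[OF ff(2) x] .
        then have s2: "S j' j' (eN j j' (f (pM i' i a'))) (eN j j' (f a))"
          using Nx.cons_embD(2)[OF ceN idx(4,6)] by blast
        have "f' a' \<in> N j'" "f a \<in> N j" using F_app ff d by blast+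
        then show "S j' j (f' a') (f a)" using dirN[OF idx(3,4,6)] Nx.rtrans[OF s1 s2] by blast
      qed
    qed
    then show "Rf q p f' f \<longleftrightarrow> consistent (I \<times> J) LE F Rf q f' q (embF M pM eN p q f)"
      using c p q by simp
  qed
  show ?thesis unfolding direct_system_def
    using fpf embF_cons[OF cpM ceN] embF_coh[OF cpM ceN hpM heN] ch by blast
qed

lemma fs_inverse:
  assumes dir: "direct_system I leI M R" and inv: "inverse_system J leJ N S"
  shows "inverse_system (I \<times> J) LE F Rf"
proof -
  obtain eM where ceM: "cons_embeddings I leI M R eM" and heM: "coherent_embeddings I leI M R eM"
    and dirM: "\<And>i i' a' a. i \<in> I \<Longrightarrow> i' \<in> I \<Longrightarrow> leI i i' \<Longrightarrow> a' \<in> M i' \<Longrightarrow> a \<in> M i \<Longrightarrow>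
       R i' i a' a \<longleftrightarrow> R i' i' a' (eM i i' a)"
    using Mx.direct_D[OF dir] by blast
  obtain pN where cpN: "cons_projections J leJ N S pN" and hpN: "coherent_projections J leJ N S pN"
    and invN: "\<And>j j' b' b. j \<in> J \<Longrightarrow> j' \<in> J \<Longrightarrow> leJ j j' \<Longrightarrow> b' \<in> N j' \<Longrightarrow> b \<in> N j \<Longrightarrow>
       S j' j b' b \<longleftrightarrow> S j j (pN j' j b') b"
    using Nx.inverse_D[OF inv] by blast
  have ch: "\<forall>p\<in>I \<times> J. \<forall>q\<in>I \<times> J. LE p q \<longrightarrow> (\<forall>f'\<in>F q. \<forall>f\<in>F p.
     Rf q p f' f \<longleftrightarrow> consistent (I \<times> J) LE F Rf p (projF M eM pN q p f') p f)"
  proof (intro ballI impI)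
    fix p q f' f assume h: "p \<in> I \<times> J" "q \<in> I \<times> J" "LE p q" "f' \<in> F q" "f \<in> F p"
    obtain i j where p: "p = (i,j)" by force
    obtain i' j' where q: "q = (i',j')" by force
    have idx: "i \<in> I" "i' \<in> I" "j \<in> J" "j' \<in> J" "leI i i'" "leJ j j'"
      using h unfolding p q fs_le_def by auto
    have ff: "f' \<in> F (i',j')" "f \<in> F (i,j)" using h p q by auto
    have g: "projF M eM pN (i',j') (i,j) f' \<in> F (i,j)" using projF_F[OF ceM cpN idx ff(1)] .
    have c: "consistent (I \<times> J) LE F Rf p (projF M eM pN q p f') p f \<longleftrightarrow>
        Rf (i,j) (i,j) (projF M eM pN (i',j') (i,j) f') f"
      unfolding p q using Fx.C_iff' idx g ff by blast
    have "Rf (i',j') (i,j) f' f \<longleftrightarrow> Rf (i,j) (i,j) (projF M eM pN (i',j') (i,j) f') f"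
    proof
      assume r0: "Rf (i',j') (i,j) f' f"
      show "Rf (i,j) (i,j) (projF M eM pN (i',j') (i,j) f') f"
      proof (rule Rf_I[OF idx(1,3,1,3) Mx.le_refl[OF idx(1)] Nx.le_refl[OF idx(3)] g ff(2)])
        fix a' a assume r: "R i i a' a"
        from Mx.dom[OF r] have d: "a' \<in> M i" "a \<in> M i" by auto
        have ea: "eM i i' a' \<in> M i'" using Mx.cons_embD(1)[OF ceM idx(1,2,5) d(1)] .
        have "R i' i' (eM i i' a') (eM i i' a)" using Mx.cons_embD(2)[OF ceM idx(2,5) r] .
        then have "R i' i (eM i i' a') a" using dirM[OF idx(1,2,5) ea d(2)] by blast
        then have s: "S j' j (f' (eM i i' a')) (f a)" using Rf_app[OF r0] by blast
        have "f' (eM i i' a') \<in> N j'" "f a \<in> N j" using F_app ff d ea by blast+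
        then have "S j j (pN j' j (f' (eM i i' a'))) (f a)" using invN[OF idx(3,4,6)] s by blast
        then show "S j j (projF M eM pN (i',j') (i,j) f' a') (f a)" unfolding projF_app[OF d(1)] .
      qed
    next
      assume r0: "Rf (i,j) (i,j) (projF M eM pN (i',j') (i,j) f') f"
      show "Rf (i',j') (i,j) f' f"
      proof (rule Rf_I[OF idx(2,4,1,3,5,6) ff])
        fix x a assume r: "R i' i x a"
        from Mx.dom[OF r] have d: "x \<in> M i'" "a \<in> M i" by auto
        have ea: "eM i i' a \<in> M i'" using Mx.cons_embD(1)[OF ceM idx(1,2,5) d(2)] .
        have "R i' i' x (eM i i' a)" using dirM[OF idx(1,2,5) d] r by blast
        then have "S j' j' (f' x) (f' (eM i i' a))" using F_R[OF ff(1)] by blast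
        then have s1: "S j j (pN j' j (f' x)) (pN j' j (f' (eM i i' a)))"
          using Nx.cons_projD(2)[OF cpN idx(3,6)] by blast
        have s2: "S j j (pN j' j (f' (eM i i' a))) (f a)"
          using Rf_app[OF r0 Mx.rrefl[OF idx(1) d(2)]] unfolding projF_app[OF d(2)] .
        have "f' x \<in> N j'" "f a \<in> N j" using F_app ff d by blast+
        then show "S j' j (f' x) (f a)" using invN[OF idx(3,4,6)] Nx.rtrans[OF s1 s2] by blast
      qed
    qed
    then show "Rf q p f' f \<longleftrightarrow> consistent (I \<times> J) LE F Rf p (projF M eM pN q p f') p f"
      using c p q by simp
  qed
  show ?thesis unfolding inverse_system_def
    using fpf projF_cons[OF ceM cpN] projF_coh[OF ceM cpN heM hpN] ch by blast
qed

end



theorem proposition2p7: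
  fixes I :: "'i set" and leI :: "'i \<Rightarrow> 'i \<Rightarrow> bool"
    and M :: "'i \<Rightarrow> 'a set" and R :: "'i \<Rightarrow> 'i \<Rightarrow> 'a \<Rightarrow> 'a \<Rightarrow> bool"
    and J :: "'j set" and leJ :: "'j \<Rightarrow> 'j \<Rightarrow> bool"
    and N :: "'j \<Rightarrow> 'b set" and S :: "'j \<Rightarrow> 'j \<Rightarrow> 'b \<Rightarrow> 'b \<Rightarrow> bool"
  assumes "factor_system I leI M R" and "factor_system J leJ N S"
  shows "factor_system (I \<times> J) (fs_le leI leJ) (fs_states I leI M R J leJ N S) (fs_rel I leI M R J leJ N S)
    \<and> (cond_Fun J leJ N S \<longrightarrow>
         cond_Fun (I \<times> J) (fs_le leI leJ) (fs_states I leI M R J leJ N S) (fs_rel I leI M R J leJ N S))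
    \<and> (cond_Stab J leJ N S \<longrightarrow>
         cond_Stab (I \<times> J) (fs_le leI leJ) (fs_states I leI M R J leJ N S) (fs_rel I leI M R J leJ N S))
    \<and> (inverse_system I leI M R \<and> direct_system J leJ N S \<longrightarrow>
         direct_system (I \<times> J) (fs_le leI leJ) (fs_states I leI M R J leJ N S) (fs_rel I leI M R J leJ N S))
    \<and> (direct_system I leI M R \<and> inverse_system J leJ N S \<longrightarrow>
         inverse_system (I \<times> J) (fs_le leI leJ) (fs_states I leI M R J leJ N S) (fs_rel I leI M R J leJ N S))"
proof -
  have pM0: "pfs I leI M R" using assms(1) unfolding factor_system_def by (intro pfs.intro) blast
  have pN0: "pfs J leJ N S" using assms(2) unfolding factor_system_def by (intro pfs.intro) blast
  interpret fsp I leI M R J leJ N S by (rule fsp.intro[OF pM0 pN0])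
  obtain eM pM where pairM: "emb_proj_pair I leI M R eM pM" and heM: "coherent_embeddings I leI M R eM"
    and hpM: "coherent_projections I leI M R pM" using Mx.factor_D[OF assms(1)] by blast
  obtain eN pN where pairN: "emb_proj_pair J leJ N S eN pN" and heN: "coherent_embeddings J leJ N S eN"
    and hpN: "coherent_projections J leJ N S pN" using Nx.factor_D[OF assms(2)] by blast
  have ceM: "cons_embeddings I leI M R eM" and cpM: "cons_projections I leI M R pM"
    using pairM unfolding emb_proj_pair_def by blast+
  have ceN: "cons_embeddings J leJ N S eN" and cpN: "cons_projections J leJ N S pN"
    using pairN unfolding emb_proj_pair_def by blast+
  have fpf: "prefactor_system (I \<times> J) LE F Rf" by (rule fs_prefactor[OF ceM heM])
  interpret fsp2 I leI M R J leJ N S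
    by (rule fsp2.intro[OF fsp.intro[OF pM0 pN0] fsp2_axioms.intro[OF fpf]])
  have "factor_system (I \<times> J) LE F Rf"
    unfolding factor_system_def
    using fpf fs_pair[OF cpM ceM cpN ceN pairM pairN] embF_coh[OF cpM ceN hpM heN]
      projF_coh[OF ceM cpN heM hpN] by blast
  then show ?thesis using fs_Fun fs_Stab fs_direct fs_inverse by blast
qed

end
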